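(* Let $X$ and $Y$ be nonempty sets with $\operatorname{card} Y\ge 3$, and let $\mathcal P$ be a nonempty collection of subsets of $X$. Define the binary relation $\hat{\mathcal P}$ on $Y^X$ by declaring $f\,\hat{\mathcal P}\,g$ if and only if $\{x\in X\mid f(x)=g(x)\}\in\mathcal P$. Then $\mathcal P$ is a filter on $X$ if and only if $\hat{\mathcal P}$ is a nontrivial equivalence relation on $Y^X$.
   Context: Let $X$ be a nonempty set. A nonempty collection $\mathcal P$ of subsets of $X$ is a filter on $X$ if it satisfies: (F0) for every $n\ge 1$ and all $A_1,\dots,A_n\in\mathcal P$, $A_1\cap\cdots\cap A_n\neq\emptyset$; (F1) if $A\supseteq B$ and $B\in\mathcal P$ then $A\in\mathcal P$; (F2) for all $A,B\in\mathcal P$ there is $C\in\mathcal P$ with $C\subseteq A\cap B$. $Y^X$ denotes the set of all functions $X\to Y$. An equivalence relation on a set $S$ is called nontrivial if it is not the total relation $S\times S$ (i.e. not all pairs of elements are related). *)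

theory Defs
  imports Main "HOL-Library.FuncSet"
begin

definition is_filter_on :: "'a set \<Rightarrow> 'a set set \<Rightarrow> bool" where
  "is_filter_on X P \<longleftrightarrow>
     P \<noteq> {} \<and> (\<forall>A\<in>P. A \<subseteq> X) \<and>
     (\<forall>n\<ge>1. \<forall>A::nat \<Rightarrow> 'a set. (\<forall>i<n. A i \<in> P) \<longrightarrow> (\<Inter>i<n. A i) \<noteq> {}) \<and>
     (\<forall>A B. A \<subseteq> X \<and> B \<subseteq> A \<and> B \<in> P \<longrightarrow> A \<in> P) \<and>
     (\<forall>A\<in>P. \<forall>B\<in>P. \<exists>C\<in>P. C \<subseteq> A \<inter> B)"

definition hatP :: "'a set \<Rightarrow> 'b set \<Rightarrow> 'a set set \<Rightarrow> (('a \<Rightarrow> 'b) \<times> ('a \<Rightarrow> 'b)) set" where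
  "hatP X Y P = {(f, g). f \<in> X \<rightarrow>\<^sub>E Y \<and> g \<in> X \<rightarrow>\<^sub>E Y \<and> {x\<in>X. f x = g x} \<in> P}"

end

theory Submission
  imports Defs
begin

lemma three_elems:
  assumes "infinite Y \<or> card Y \<ge> 3"
  obtains y1 y2 y3 where "y1 \<in> Y" "y2 \<in> Y" "y3 \<in> Y" "y1 \<noteq> y2" "y2 \<noteq> y3" "y1 \<noteq> y3"
proof -
  obtain T where T: "T \<subseteq> Y" "card T = 3"
    using assms infinite_arbitrarily_large obtain_subset_with_card_n by metis
  then obtain x y z where "T = {x,y,z}" "x \<noteq> y" "y \<noteq> z" "x \<noteq> z"
    using card_3_iff by metis
  then show ?thesis using that T by auto
qed

lemma hatP_mem: "(f,g) \<in> hatP X Y P \<longleftrightarrow> f \<in> X \<rightarrow>\<^sub>E Y \<and> g \<in> X \<rightarrow>\<^sub>E Y \<and> {x\<in>X. f x = g x} \<in> P"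
  by (simp add: hatP_def)

lemma two_val: "a \<in> Y \<Longrightarrow> b \<in> Y \<Longrightarrow> (\<lambda>x\<in>X. if x \<in> A then a else b) \<in> X \<rightarrow>\<^sub>E Y"
  by auto

theorem mainTheorem1:
  fixes X :: "'a set" and Y :: "'b set" and P :: "'a set set"
  assumes "X \<noteq> {}" and "Y \<noteq> {}"
    and "infinite Y \<or> card Y \<ge> 3"
    and "P \<noteq> {}" and "\<forall>A\<in>P. A \<subseteq> X"
  shows "is_filter_on X P \<longleftrightarrow>
           (equiv (X \<rightarrow>\<^sub>E Y) (hatP X Y P) \<and>
            hatP X Y P \<noteq> (X \<rightarrow>\<^sub>E Y) \<times> (X \<rightarrow>\<^sub>E Y))"
proof -
  obtain y1 y2 y3 where y: "y1 \<in> Y" "y2 \<in> Y" "y3 \<in> Y" "y1 \<noteq> y2" "y2 \<noteq> y3" "y1 \<noteq> y3"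
    using three_elems[OF assms(3)] by metis
  let ?R = "hatP X Y P"
  show ?thesis
  proof
    assume F: "is_filter_on X P"
    have F0: "\<forall>n\<ge>1. \<forall>A::nat \<Rightarrow> 'a set. (\<forall>i<n. A i \<in> P) \<longrightarrow> (\<Inter>i<n. A i) \<noteq> {}"
      using F[unfolded is_filter_on_def] by (elim conjE) assumption
    have F1: "\<forall>A B. A \<subseteq> X \<and> B \<subseteq> A \<and> B \<in> P \<longrightarrow> A \<in> P"
      using F[unfolded is_filter_on_def] by (elim conjE) assumption
    have F2: "\<forall>A\<in>P. \<forall>B\<in>P. \<exists>C\<in>P. C \<subseteq> A \<inter> B"
      using F[unfolded is_filter_on_def] by (elim conjE) assumption
    have up: "\<And>A B. A \<subseteq> X \<Longrightarrow> B \<subseteq> A \<Longrightarrow> B \<in> P \<Longrightarrow> A \<in> P"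
      using F1 by blast
    have int: "\<And>A B. A \<in> P \<Longrightarrow> B \<in> P \<Longrightarrow> \<exists>C\<in>P. C \<subseteq> A \<inter> B"
      using F2 by blast
    have XP: "X \<in> P"
    proof -
      obtain A where "A \<in> P" using assms(4) by blast
      then show ?thesis using up[of X A] assms(5) by blast
    qed
    have ne: "{} \<notin> P"
    proof
      assume "{} \<in> P"
      with F0 have "(\<Inter>i<(1::nat). (\<lambda>_. {}) i) \<noteq> ({}::'a set)"
        by (metis le_refl)
      then show False by (simp add: lessThan_Suc)
    qed
    have "equiv (X \<rightarrow>\<^sub>E Y) ?R"
    proof (rule equivI)
      show "refl_on (X \<rightarrow>\<^sub>E Y) ?R"
        unfolding refl_on_def hatP_def using XP by auto
      show "sym ?R" unfolding sym_def hatP_def by (auto simp: eq_commute)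
      show "trans ?R"
      proof (rule transI)
        fix f g h assume a: "(f,g) \<in> ?R" "(g,h) \<in> ?R"
        then obtain C where C: "C \<in> P" "C \<subseteq> {x\<in>X. f x = g x} \<inter> {x\<in>X. g x = h x}"
          using int unfolding hatP_mem by blast
        then have "{x\<in>X. f x = h x} \<in> P" by (intro up[OF _ _ C(1)]) (use C in force)+
        then show "(f,h) \<in> ?R" using a unfolding hatP_mem by blast
      qed
      show "?R \<subseteq> (X \<rightarrow>\<^sub>E Y) \<times> (X \<rightarrow>\<^sub>E Y)" unfolding hatP_def by auto
    qed
    moreover have "hatP X Y P \<noteq> (X \<rightarrow>\<^sub>E Y) \<times> (X \<rightarrow>\<^sub>E Y)"
    proof
      assume eq: "hatP X Y P = (X \<rightarrow>\<^sub>E Y) \<times> (X \<rightarrow>\<^sub>E Y)"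
      let ?f = "\<lambda>x\<in>X. y1" and ?g = "\<lambda>x\<in>X. y2"
      have "(?f, ?g) \<in> ?R" unfolding eq using y by auto
      then have "{x\<in>X. ?f x = ?g x} \<in> P" unfolding hatP_mem by blast
      moreover have "{x\<in>X. ?f x = ?g x} = {}" using y by auto
      ultimately show False using ne by metis
    qed
    ultimately show "equiv (X \<rightarrow>\<^sub>E Y) ?R \<and> ?R \<noteq> (X \<rightarrow>\<^sub>E Y) \<times> (X \<rightarrow>\<^sub>E Y)" by blast
  next
    assume E: "equiv (X \<rightarrow>\<^sub>E Y) ?R \<and> ?R \<noteq> (X \<rightarrow>\<^sub>E Y) \<times> (X \<rightarrow>\<^sub>E Y)"
    have tr: "\<And>f g h. (f,g) \<in> ?R \<Longrightarrow> (g,h) \<in> ?R \<Longrightarrow> (f,h) \<in> ?R"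
      using E unfolding equiv_def trans_def by blast
    have XP: "X \<in> P"
    proof -
      let ?f = "\<lambda>x\<in>X. y1"
      have "?f \<in> X \<rightarrow>\<^sub>E Y" using y by auto
      then have "(?f,?f) \<in> ?R" using E unfolding equiv_def refl_on_def by blast
      then have "{x\<in>X. ?f x = ?f x} \<in> P" unfolding hatP_mem by blast
      then show ?thesis by simp
    qed
    have up: "\<And>A B. A \<subseteq> X \<Longrightarrow> B \<subseteq> A \<Longrightarrow> B \<in> P \<Longrightarrow> A \<in> P"
    proof -
      fix A B assume AB: "A \<subseteq> X" "B \<subseteq> A" "B \<in> P"
      define f where "f = (\<lambda>x\<in>X. if x \<in> A then y1 else y2)"
      define g where "g = (\<lambda>x\<in>X. if x \<in> B then y1 else y3)"
      define h where "h = (\<lambda>x\<in>X. if x \<in> X then y1 else y1)"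
      have fY: "f \<in> X \<rightarrow>\<^sub>E Y" "g \<in> X \<rightarrow>\<^sub>E Y" "h \<in> X \<rightarrow>\<^sub>E Y"
        unfolding f_def g_def h_def using y by (auto intro: two_val)
      have "{x\<in>X. f x = g x} = B" using AB y unfolding f_def g_def by auto
      then have 1: "(f,g) \<in> ?R" using fY AB unfolding hatP_mem by simp
      have "{x\<in>X. g x = h x} = B" using AB y unfolding g_def h_def by auto
      then have 2: "(g,h) \<in> ?R" using fY AB unfolding hatP_mem by simp
      have "(f,h) \<in> ?R" using tr[OF 1 2] .
      moreover have "{x\<in>X. f x = h x} = A" using AB y unfolding f_def h_def by auto
      ultimately show "A \<in> P" unfolding hatP_mem by simp
    qed
    have int: "\<And>A B. A \<in> P \<Longrightarrow> B \<in> P \<Longrightarrow> A \<inter> B \<in> P"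
    proof -
      fix A B assume AB: "A \<in> P" "B \<in> P"
      then have sub: "A \<subseteq> X" "B \<subseteq> X" using assms(5) by auto
      define f where "f = (\<lambda>x\<in>X. if x \<in> A then y1 else y2)"
      define g where "g = (\<lambda>x\<in>X. if x \<in> X then y1 else y1)"
      define h where "h = (\<lambda>x\<in>X. if x \<in> B then y1 else y3)"
      have fY: "f \<in> X \<rightarrow>\<^sub>E Y" "g \<in> X \<rightarrow>\<^sub>E Y" "h \<in> X \<rightarrow>\<^sub>E Y"
        unfolding f_def g_def h_def using y by (auto intro: two_val)
      have "{x\<in>X. f x = g x} = A" using sub y unfolding f_def g_def by auto
      then have 1: "(f,g) \<in> ?R" using fY AB unfolding hatP_mem by simp
      have "{x\<in>X. g x = h x} = B" using sub y unfolding g_def h_def by auto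
      then have 2: "(g,h) \<in> ?R" using fY AB unfolding hatP_mem by simp
      have "(f,h) \<in> ?R" using tr[OF 1 2] .
      moreover have "{x\<in>X. f x = h x} = A \<inter> B" using sub y unfolding f_def h_def by auto
      ultimately show "A \<inter> B \<in> P" unfolding hatP_mem by simp
    qed
    have ne: "{} \<notin> P"
    proof
      assume "{} \<in> P"
      then have "\<And>S. S \<subseteq> X \<Longrightarrow> S \<in> P" using up by blast
      then have "?R = (X \<rightarrow>\<^sub>E Y) \<times> (X \<rightarrow>\<^sub>E Y)" unfolding hatP_def by auto
      then show False using E by blast
    qed
    have fin: "\<And>(A::nat \<Rightarrow> 'a set) n. (\<forall>i<n. A i \<in> P) \<longrightarrow> X \<inter> (\<Inter>i<n. A i) \<in> P"
    proof -
      fix A :: "nat \<Rightarrow> 'a set" and n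
      show "(\<forall>i<n. A i \<in> P) \<longrightarrow> X \<inter> (\<Inter>i<n. A i) \<in> P"
      proof (induction n)
        case 0 then show ?case using XP by simp
      next
        case (Suc n)
        show ?case
        proof
          assume a: "\<forall>i<Suc n. A i \<in> P"
          then have "X \<inter> (\<Inter>i<n. A i) \<in> P" using Suc by simp
          then have "(X \<inter> (\<Inter>i<n. A i)) \<inter> A n \<in> P" using a int by simp
          moreover have "(X \<inter> (\<Inter>i<n. A i)) \<inter> A n = X \<inter> (\<Inter>i<Suc n. A i)"
            by (auto simp: lessThan_Suc)
          ultimately show "X \<inter> (\<Inter>i<Suc n. A i) \<in> P" by simp
        qed
      qed
    qed
    have F0: "\<forall>n\<ge>1. \<forall>A::nat \<Rightarrow> 'a set. (\<forall>i<n. A i \<in> P) \<longrightarrow> (\<Inter>i<n. A i) \<noteq> {}"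
    proof (intro allI impI)
      fix n :: nat and A :: "nat \<Rightarrow> 'a set"
      assume "1 \<le> n" "\<forall>i<n. A i \<in> P"
      then have "X \<inter> (\<Inter>i<n. A i) \<in> P" using fin by blast
      then have "X \<inter> (\<Inter>i<n. A i) \<noteq> {}" using ne by auto
      then show "(\<Inter>i<n. A i) \<noteq> {}" by auto
    qed
    show "is_filter_on X P"
      unfolding is_filter_on_def
    proof (intro conjI)
      show "P \<noteq> {}" using assms(4) .
      show "\<forall>A\<in>P. A \<subseteq> X" using assms(5) .
      show "\<forall>n\<ge>1. \<forall>A::nat \<Rightarrow> 'a set. (\<forall>i<n. A i \<in> P) \<longrightarrow> (\<Inter>i<n. A i) \<noteq> {}" using F0 .
      show "\<forall>A B. A \<subseteq> X \<and> B \<subseteq> A \<and> B \<in> P \<longrightarrow> A \<in> P" using up by blast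
      show "\<forall>A\<in>P. \<forall>B\<in>P. \<exists>C\<in>P. C \<subseteq> A \<inter> B" using int by blast
    qed
  qed
qed

end
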